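(* Let $A\subseteq B\subseteq\mathbb{N}$. If $B\in\mathcal{D}$, then there exists $C\in\mathcal{D}$ such that $d(C)=\overline{\overline{d}}(A)$ and $A\subseteq C\subseteq B$. If $A\in\mathcal{D}$, then there exists $C\in\mathcal{D}$ such that $d(C)=\underline{\underline{d}}(B)$ and $A\subseteq C\subseteq B$.
   Context: $\mathbb{N}=\{1,2,3,\dots\}$. For $A\subseteq\mathbb{N}$ let $A(n)=|A\cap[1,n]|$. Let $\mathcal{D}$ be the collection of all $A\subseteq\mathbb{N}$ for which the asymptotic density $d(A)=\lim_{n\to\infty}\frac{A(n)}{n}$ exists. Define $\underline{\underline{d}}(A)=\sup\{d(B);\ B\subseteq A,\ B\in\mathcal{D}\}$ and $\overline{\overline{d}}(A)=\inf\{d(C);\ C\supseteq A,\ C\in\mathcal{D}\}$. *)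

theory Defs
  imports "HOL-Analysis.Analysis"
begin

definition cnt :: "nat set \<Rightarrow> nat \<Rightarrow> nat" where
  "cnt A n = card (A \<inter> {1..n})"

definition has_density :: "nat set \<Rightarrow> real \<Rightarrow> bool" where
  "has_density A \<delta> \<longleftrightarrow> ((\<lambda>n. real (cnt A n) / real n) \<longlongrightarrow> \<delta>) sequentially"

definition Dens :: "nat set set" where
  "Dens = {A. A \<subseteq> {1..} \<and> (\<exists>\<delta>. has_density A \<delta>)}"

definition dens :: "nat set \<Rightarrow> real" where
  "dens A = lim (\<lambda>n. real (cnt A n) / real n)"

definition lower_dd :: "nat set \<Rightarrow> real" where
  "lower_dd A = Sup {dens B | B. B \<subseteq> A \<and> B \<in> Dens}"

definition upper_dd :: "nat set \<Rightarrow> real" where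
  "upper_dd A = Inf {dens C | C. A \<subseteq> C \<and> C \<in> Dens}"

end

theory Submission
  imports Defs
begin


lemma cnt_Suc: "cnt Z (Suc n) = cnt Z n + (if Suc n \<in> Z then 1 else 0)"
proof -
  have "Z \<inter> {1..Suc n} = (if Suc n \<in> Z then insert (Suc n) (Z \<inter> {1..n}) else Z \<inter> {1..n})"
    by (auto simp: le_Suc_eq)
  then show ?thesis by (simp add: cnt_def)
qed

lemma cnt_0[simp]: "cnt Z 0 = 0" by (simp add: cnt_def)

lemma cnt_le: "cnt Z n \<le> n"
proof -
  have "card (Z \<inter> {1..n}) \<le> card {1..n}" by (rule card_mono) auto
  then show ?thesis by (simp add: cnt_def)
qed

lemma cnt_compl: "cnt ({1..} - Z) n = n - cnt Z n"
proof -
  have "({1..} - Z) \<inter> {1..n} = {1..n} - ({1..n} \<inter> Z)" by auto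
  then have "card (({1..} - Z) \<inter> {1..n}) = card {1..n} - card ({1..n} \<inter> Z)"
    by (simp add: card_Diff_subset)
  then show ?thesis by (simp add: cnt_def Int_commute)
qed

lemma dens_eq: "has_density Z d \<Longrightarrow> dens Z = d"
  unfolding has_density_def dens_def by (rule limI)

lemma Dens_has: "Z \<in> Dens \<Longrightarrow> has_density Z (dens Z)"
proof -
  assume "Z \<in> Dens"
  then obtain d where "has_density Z d" unfolding Dens_def by blast
  then show ?thesis using dens_eq by simp
qed

lemma dens_nonneg: assumes "has_density Z d" shows "0 \<le> d"
proof (rule LIMSEQ_le_const)
  show "(\<lambda>n. real (cnt Z n) / real n) \<longlonglongrightarrow> d" using assms unfolding has_density_def .
  show "\<exists>N. \<forall>n\<ge>N. 0 \<le> real (cnt Z n) / real n" by auto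
qed

lemma compl_density:
  assumes "has_density Z d"
  shows "has_density ({1..} - Z) (1 - d)"
proof -
  have L: "(\<lambda>n. real (cnt Z n) / real n) \<longlonglongrightarrow> d" using assms unfolding has_density_def .
  have L1: "(\<lambda>n. 1 - real (cnt Z n) / real n) \<longlonglongrightarrow> 1 - d"
    by (rule tendsto_diff[OF tendsto_const L])
  have ev: "\<forall>\<^sub>F n in sequentially. 1 - real (cnt Z n) / real n = real (cnt ({1..} - Z) n) / real n"
    using eventually_ge_at_top[of "1::nat"]
  proof eventually_elim
    case (elim n)
    have "cnt ({1..} - Z) n = n - cnt Z n" by (rule cnt_compl)
    then have "real (cnt ({1..} - Z) n) = real n - real (cnt Z n)" using cnt_le[of Z n] by (simp add: of_nat_diff)
    moreover have "real n / real n = 1" using elim by simp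
    ultimately show ?case by (simp add: diff_divide_distrib)
  qed
  show ?thesis unfolding has_density_def by (rule Lim_transform_eventually[OF L1 ev])
qed

lemma small_aux:
  fixes h :: "nat \<Rightarrow> real"
  assumes "h \<longlonglongrightarrow> 0" "e > 0"
  shows "\<exists>N. \<forall>n\<ge>N. \<forall>m\<le>n. real m * \<bar>h m\<bar> \<le> e * real n"
proof -
  obtain N1 where N1: "\<forall>m\<ge>N1. \<bar>h m\<bar> < e" using LIMSEQ_D[OF assms] by auto
  define K where "K = (\<Sum>m<N1. real m * \<bar>h m\<bar>)"
  have K: "real m * \<bar>h m\<bar> \<le> K" if "m < N1" for m
    unfolding K_def by (rule member_le_sum) (use that in auto)
  define N2 where "N2 = nat \<lceil>K / e\<rceil>"
  have "K / e \<le> real N2" unfolding N2_def by linarith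
  then have KN2: "K \<le> e * real N2" using assms(2) by (simp add: field_simps)
  show ?thesis
  proof (intro exI[of _ "max N1 N2"] allI impI)
    fix n m assume n: "max N1 N2 \<le> n" and m: "m \<le> n"
    show "real m * \<bar>h m\<bar> \<le> e * real n"
    proof (cases "m \<ge> N1")
      case True
      then have "real m * \<bar>h m\<bar> \<le> real m * e" using N1 by (intro mult_left_mono) auto
      also have "\<dots> \<le> e * real n" using m assms(2) by simp
      finally show ?thesis .
    next
      case False
      then have "real m * \<bar>h m\<bar> \<le> K" using K by simp
      also have "\<dots> \<le> e * real N2" by fact
      also have "\<dots> \<le> e * real n" using n assms(2) by simp
      finally show ?thesis .
    qed
  qed
qed

fun zc :: "nat set \<Rightarrow> nat set \<Rightarrow> nat \<Rightarrow> nat" where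
  "zc C Y 0 = 0"
| "zc C Y (Suc n) = (if Suc n \<in> Y \<and> (Suc n \<in> C \<or> zc C Y n < cnt C n) then Suc (zc C Y n) else zc C Y n)"

lemma zc_inv:
  "zc C Y n \<le> cnt C n \<and> (\<exists>m\<le>n. int (cnt C n) - int (zc C Y n) \<le>
      (int (cnt C n) - int (cnt Y n)) - (int (cnt C m) - int (cnt Y m)))"
proof (induction n)
  case 0 then show ?case by simp
next
  case (Suc n)
  then obtain m where m: "m \<le> n" "int (cnt C n) - int (zc C Y n) \<le>
      (int (cnt C n) - int (cnt Y n)) - (int (cnt C m) - int (cnt Y m))" and le: "zc C Y n \<le> cnt C n"
    by auto
  have e1: "cnt C (Suc n) = cnt C n + (if Suc n \<in> C then 1 else 0)" by (rule cnt_Suc)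
  have e2: "cnt Y (Suc n) = cnt Y n + (if Suc n \<in> Y then 1 else 0)" by (rule cnt_Suc)
  have e3: "zc C Y (Suc n) = (if Suc n \<in> Y \<and> (Suc n \<in> C \<or> zc C Y n < cnt C n) then Suc (zc C Y n) else zc C Y n)"
    by simp
  show ?case
  proof (cases "Suc n \<in> Y \<and> Suc n \<notin> C \<and> \<not> zc C Y n < cnt C n")
    case True
    then have "zc C Y (Suc n) = cnt C (Suc n)" using le e1 e3 by simp
    then show ?thesis by (intro conjI exI[of _ "Suc n"]) auto
  next
    case False
    have "zc C Y (Suc n) \<le> cnt C (Suc n) \<and> int (cnt C (Suc n)) - int (zc C Y (Suc n)) \<le>
      (int (cnt C (Suc n)) - int (cnt Y (Suc n))) - (int (cnt C m) - int (cnt Y m))"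
    proof (cases "Suc n \<in> C"; cases "Suc n \<in> Y")
    qed (use False le m(2) e1 e2 e3 in \<open>simp_all only: if_True if_False simp_thms\<close>; linarith)+
    then show ?thesis using m(1) by (intro conjI exI[of _ m]) auto
  qed
qed

lemma key:
  assumes "A \<subseteq> C" "A \<subseteq> Y" "has_density C c" "has_density Y y" "c \<le> y"
  shows "\<exists>Z. A \<subseteq> Z \<and> Z \<subseteq> Y \<and> has_density Z c"
proof -
  define Z where "Z = {k \<in> Y. k \<in> C \<or> zc C Y (k - 1) < cnt C (k - 1)}"
  have cntZ: "cnt Z n = zc C Y n" for n
  proof (induction n)
    case (Suc n)
    have "Suc n \<in> Z \<longleftrightarrow> (Suc n \<in> Y \<and> (Suc n \<in> C \<or> zc C Y n < cnt C n))" by (simp add: Z_def)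
    then show ?case using Suc.IH by (simp add: cnt_Suc)
  qed simp
  define h where "h n = real (cnt C n) / real n - real (cnt Y n) / real n - (c - y)" for n
  have h0: "h \<longlonglongrightarrow> 0"
  proof -
    have "h \<longlonglongrightarrow> c - y - (c - y)" unfolding h_def
      using assms(3,4) unfolding has_density_def by (intro tendsto_intros)
    then show ?thesis by simp
  qed
  have Dn: "real (cnt C n) - real (cnt Y n) = real n * (c - y) + real n * h n" for n
    by (cases "n = 0") (auto simp: h_def field_simps)
  define g where "g n = real (cnt C n) - real (zc C Y n)" for n
  have g0: "g n \<ge> 0" for n using zc_inv[of C Y n] by (simp add: g_def)
  have gb: "\<exists>m\<le>n. g n \<le> real n * \<bar>h n\<bar> + real m * \<bar>h m\<bar>" for n
  proof -
    obtain m where m: "m \<le> n" "int (cnt C n) - int (zc C Y n) \<le>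
      (int (cnt C n) - int (cnt Y n)) - (int (cnt C m) - int (cnt Y m))"
      using zc_inv[of C Y n] by auto
    then have "g n \<le> (real (cnt C n) - real (cnt Y n)) - (real (cnt C m) - real (cnt Y m))"
      unfolding g_def by linarith
    also have "\<dots> = (real n - real m) * (c - y) + real n * h n - real m * h m"
      by (simp add: Dn algebra_simps)
    also have "\<dots> \<le> real n * \<bar>h n\<bar> + real m * \<bar>h m\<bar>"
    proof -
      have "(real n - real m) * (c - y) \<le> 0" using m(1) assms(5) by (intro mult_nonneg_nonpos) auto
      moreover have "real n * h n \<le> real n * \<bar>h n\<bar>" by (intro mult_left_mono) auto
      moreover have "- (real m * h m) \<le> real m * \<bar>h m\<bar>" 
        using mult_left_mono[of "- h m" "\<bar>h m\<bar>" "real m"] by simp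
      ultimately show ?thesis by linarith
    qed
    finally show ?thesis using m(1) by auto
  qed
  have gl: "(\<lambda>n. g n / real n) \<longlonglongrightarrow> 0"
  proof (rule LIMSEQ_I)
    fix r :: real assume r: "0 < r"
    obtain N where N: "\<forall>n\<ge>N. \<forall>m\<le>n. real m * \<bar>h m\<bar> \<le> r / 3 * real n"
      using small_aux[OF h0, of "r/3"] r by auto
    show "\<exists>no. \<forall>n\<ge>no. norm (g n / real n - 0) < r"
    proof (intro exI[of _ "Suc N"] allI impI)
      fix n assume n: "Suc N \<le> n"
      obtain m where m: "m \<le> n" "g n \<le> real n * \<bar>h n\<bar> + real m * \<bar>h m\<bar>" using gb by blast
      have a: "real n * \<bar>h n\<bar> \<le> r/3 * real n" using N n by simp
      have b: "real m * \<bar>h m\<bar> \<le> r/3 * real n" using N m n by simp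
      have "g n \<le> r/3 * real n + r/3 * real n" using a b m(2) by linarith
      moreover have "0 < r * real n" using n r by simp
      ultimately have "g n < r * real n" by linarith
      then show "norm (g n / real n - 0) < r" using g0[of n] n by (simp add: field_simps)
    qed
  qed
  have "(\<lambda>n. real (cnt C n) / real n - g n / real n) \<longlonglongrightarrow> c - 0"
    using assms(3) gl unfolding has_density_def by (intro tendsto_intros)
  moreover have "real (cnt C n) / real n - g n / real n = real (cnt Z n) / real n" for n
    by (simp add: g_def cntZ diff_divide_distrib)
  ultimately have "has_density Z c" unfolding has_density_def by simp
  moreover have "A \<subseteq> Z" using assms(1,2) by (auto simp: Z_def)
  moreover have "Z \<subseteq> Y" by (auto simp: Z_def)
  ultimately show ?thesis by blast
qed



lemma glue:
  fixes Y :: "nat \<Rightarrow> nat set" and d :: "nat \<Rightarrow> real"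
  assumes dec: "\<And>k. Y (Suc k) \<subseteq> Y k" and dY: "\<And>k. has_density (Y k) (d k)" and lim: "d \<longlonglongrightarrow> u"
  shows "\<exists>C. (\<Inter>k. Y k) \<subseteq> C \<and> C \<subseteq> Y 0 \<and> has_density C u"
proof -
  have "\<forall>k. \<exists>M. \<forall>n\<ge>M. \<bar>real (cnt (Y k) n) / real n - d k\<bar> < 1 / real (Suc k)"
  proof
    fix k
    have "(\<lambda>n. real (cnt (Y k) n) / real n) \<longlonglongrightarrow> d k" using dY[of k] unfolding has_density_def .
    from LIMSEQ_D[OF this, of "1 / real (Suc k)"] show "\<exists>M. \<forall>n\<ge>M. \<bar>real (cnt (Y k) n) / real n - d k\<bar> < 1 / real (Suc k)"
      by simp
  qed
  then obtain M where M: "\<And>k n. n \<ge> M k \<Longrightarrow> \<bar>real (cnt (Y k) n) / real n - d k\<bar> < 1 / real (Suc k)"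
    by metis
  define N where "N k = (\<Sum>i\<le>k. M i) + k" for k
  have NM: "M k \<le> N k" for k unfolding N_def by (simp add: member_le_sum trans_le_add1)
  have Nk: "k \<le> N k" for k unfolding N_def by simp
  have NSuc: "N (Suc k) = N k + M (Suc k) + 1" for k unfolding N_def by simp
  have Nmono: "strict_mono N" by (rule strict_monoI_Suc) (simp add: NSuc)
  have nest: "i \<le> j \<Longrightarrow> Y j \<subseteq> Y i" for i j
    using lift_Suc_antimono_le[of Y, OF dec] by blast
  define C where "C = {x \<in> Y 0. \<forall>j. N j \<le> x \<longrightarrow> x \<in> Y j}"
  have sub1: "(\<Inter>k. Y k) \<subseteq> C" unfolding C_def by auto
  have sub2: "C \<subseteq> Y 0" unfolding C_def by auto
  have upper: "cnt C n \<le> cnt (Y i) n + N i" for i n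
  proof -
    have "C \<inter> {1..n} \<subseteq> (Y i \<inter> {1..n}) \<union> {..<N i}" unfolding C_def by auto
    then have "card (C \<inter> {1..n}) \<le> card ((Y i \<inter> {1..n}) \<union> {..<N i})" by (intro card_mono) auto
    also have "\<dots> \<le> card (Y i \<inter> {1..n}) + card {..<N i}" by (rule card_Un_le)
    finally show ?thesis by (simp add: cnt_def)
  qed
  have lower: "cnt (Y j) n \<le> cnt C n" if "\<And>j'. N j' \<le> n \<Longrightarrow> j' \<le> j" for j n
  proof -
    have "Y j \<inter> {1..n} \<subseteq> C \<inter> {1..n}"
    proof
      fix x assume x: "x \<in> Y j \<inter> {1..n}"
      have "x \<in> Y 0" using x nest[of 0 j] by auto
      moreover have "x \<in> Y j'" if "N j' \<le> x" for j'
        using that x nest[of j' j] \<open>\<And>j'. N j' \<le> n \<Longrightarrow> j' \<le> j\<close>[of j'] by auto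
      ultimately show "x \<in> C \<inter> {1..n}" using x unfolding C_def by auto
    qed
    then have "card (Y j \<inter> {1..n}) \<le> card (C \<inter> {1..n})" by (intro card_mono) auto
    then show ?thesis by (simp add: cnt_def)
  qed
  have "(\<lambda>n. real (cnt C n) / real n) \<longlonglongrightarrow> u"
  proof (rule LIMSEQ_I)
    fix r :: real assume r: "0 < r"
    obtain J1 where J1: "\<And>j. j \<ge> J1 \<Longrightarrow> \<bar>d j - u\<bar> < r / 4"
      using LIMSEQ_D[OF lim, of "r/4"] r by auto
    define J where "J = max J1 (nat \<lceil>4 / r\<rceil>)"
    have dJ: "\<bar>d j - u\<bar> < r / 4" if "j \<ge> J" for j using J1 that unfolding J_def by auto
    have iJ: "1 / real (Suc j) < r / 4" if "j \<ge> J" for j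
    proof -
      have "4 / r \<le> real j" using that unfolding J_def by linarith
      then have "4 / r < real (Suc j)" by simp
      then have "4 < r * real (Suc j)" using r by (simp add: field_simps)
      then show ?thesis using r by (simp add: field_simps)
    qed
    define no where "no = max (N J) (nat \<lceil>4 * real (N J) / r\<rceil> + 1)"
    show "\<exists>no. \<forall>n\<ge>no. norm (real (cnt C n) / real n - u) < r"
    proof (intro exI[of _ no] allI impI)
      fix n assume n: "no \<le> n"
      have nNJ: "N J \<le> n" using n unfolding no_def by auto
      have n1: "4 * real (N J) / r < real n" using n unfolding no_def by linarith
      then have npos: "0 < real n" using r by (smt (verit) divide_nonneg_pos of_nat_0_le_iff)
      have nNJ': "real (N J) / real n < r / 4" using n1 r npos by (simp add: field_simps)
      have "real (cnt C n) \<le> real (cnt (Y J) n) + real (N J)" using upper[of n J] by linarith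
      then have up1: "real (cnt C n) / real n \<le> real (cnt (Y J) n) / real n + real (N J) / real n"
        using npos by (simp add: field_simps)
      have "\<bar>real (cnt (Y J) n) / real n - d J\<bar> < 1 / real (Suc J)" using M NM[of J] nNJ by fastforce
      then have a1: "real (cnt (Y J) n) / real n < d J + 1 / real (Suc J)" by linarith
      have a2: "d J < u + r / 4" using dJ[of J] by linarith
      have a3: "1 / real (Suc J) < r / 4" using iJ[of J] by simp
      have up: "real (cnt C n) / real n < u + 3 * r / 4" using up1 nNJ' a1 a2 a3 by linarith
      define S where "S = {j. N j \<le> n}"
      have finS: "finite S" unfolding S_def using Nk by (metis (no_types, lifting) finite_nat_set_iff_bounded_le le_trans mem_Collect_eq)
      have JS: "J \<in> S" unfolding S_def using nNJ by simp
      define j where "j = Max S"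
      have jS: "j \<in> S" unfolding j_def using finS JS by (intro Max_in) auto
      have jmax: "j' \<le> j" if "N j' \<le> n" for j' unfolding j_def using finS that S_def by auto
      have Jj: "J \<le> j" using jmax nNJ by simp
      have Njn: "N j \<le> n" using jS S_def by simp
      have "\<bar>real (cnt (Y j) n) / real n - d j\<bar> < 1 / real (Suc j)" using M NM[of j] Njn by fastforce
      moreover have "real (cnt (Y j) n) / real n \<le> real (cnt C n) / real n"
      proof -
        have "cnt (Y j) n \<le> cnt C n" using lower[where j=j and n=n] jmax by blast
        then show ?thesis using npos by (simp add: divide_right_mono)
      qed
      moreover have "d j > u - r / 4" using dJ[OF Jj] by linarith
      moreover have "1 / real (Suc j) < r / 4" using iJ[OF Jj] .
      ultimately have lo: "real (cnt C n) / real n > u - r / 2" by linarith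
      show "norm (real (cnt C n) / real n - u) < r" using up lo by auto
    qed
  qed
  then show ?thesis using sub1 sub2 unfolding has_density_def by blast
qed



lemma part1:
  assumes AB: "A \<subseteq> B" and BD: "B \<in> Dens"
  shows "\<exists>C\<in>Dens. dens C = upper_dd A \<and> A \<subseteq> C \<and> C \<subseteq> B \<and> (\<forall>C'\<in>Dens. A \<subseteq> C' \<longrightarrow> dens C \<le> dens C')"
proof -
  define S where "S = {dens C | C. A \<subseteq> C \<and> C \<in> Dens}"
  define u where "u = Inf S"
  have uS: "u = upper_dd A" unfolding u_def S_def upper_dd_def by simp
  have Sne: "S \<noteq> {}" unfolding S_def using AB BD by auto
  have bdd: "bdd_below S" unfolding S_def bdd_below_def
    using dens_nonneg Dens_has by blast
  have ule: "u \<le> dens C'" if "C' \<in> Dens" "A \<subseteq> C'" for C'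
    unfolding u_def by (rule cInf_lower) (use that bdd S_def in auto)
  have "\<forall>k. \<exists>C'. C' \<in> Dens \<and> A \<subseteq> C' \<and> dens C' < u + inverse (real (Suc k))"
  proof
    fix k
    have "Inf S < u + inverse (real (Suc k))" unfolding u_def by simp
    from cInf_lessD[OF Sne this] show "\<exists>C'. C' \<in> Dens \<and> A \<subseteq> C' \<and> dens C' < u + inverse (real (Suc k))"
      unfolding S_def u_def by auto
  qed
  then obtain F where F: "\<And>k. F k \<in> Dens" "\<And>k. A \<subseteq> F k" "\<And>k. dens (F k) < u + inverse (real (Suc k))"
    by metis
  define step where "step k Yk = (if dens (F k) \<le> dens Yk then (SOME Z. A \<subseteq> Z \<and> Z \<subseteq> Yk \<and> has_density Z (dens (F k))) else Yk)" for k Yk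
  define Y where "Y = rec_nat B step"
  have Y0: "Y 0 = B" unfolding Y_def by simp
  have YS: "Y (Suc k) = step k (Y k)" for k unfolding Y_def by simp
  have Binf: "B \<subseteq> {1..}" using BD unfolding Dens_def by auto
  have stepT: "A \<subseteq> Y (Suc k) \<and> Y (Suc k) \<subseteq> Y k \<and> has_density (Y (Suc k)) (dens (F k))"
    if T: "dens (F k) \<le> dens (Y k)" and h: "A \<subseteq> Y k" "has_density (Y k) (dens (Y k))" for k
  proof -
    have ex: "\<exists>Z. A \<subseteq> Z \<and> Z \<subseteq> Y k \<and> has_density Z (dens (F k))"
      by (rule key[OF F(2) h(1) Dens_has[OF F(1)] h(2) T])
    have sp: "Y (Suc k) = (SOME Z. A \<subseteq> Z \<and> Z \<subseteq> Y k \<and> has_density Z (dens (F k)))"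
      using T by (simp add: YS step_def)
    show ?thesis unfolding sp by (rule someI_ex[OF ex])
  qed
  have inv: "A \<subseteq> Y k \<and> Y k \<subseteq> B \<and> has_density (Y k) (dens (Y k))" for k
  proof (induction k)
    case 0 then show ?case using AB Dens_has[OF BD] by (simp add: Y0)
  next
    case (Suc k)
    show ?case
    proof (cases "dens (F k) \<le> dens (Y k)")
      case True
      have "A \<subseteq> Y (Suc k) \<and> Y (Suc k) \<subseteq> Y k \<and> has_density (Y (Suc k)) (dens (F k))"
        using stepT[OF True] Suc.IH by blast
      then show ?thesis using Suc.IH dens_eq by auto
    next
      case False
      then show ?thesis using Suc.IH by (simp add: YS step_def)
    qed
  qed
  have dec: "Y (Suc k) \<subseteq> Y k" for k
  proof (cases "dens (F k) \<le> dens (Y k)")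
    case True
    then show ?thesis using stepT[OF True] inv[of k] by blast
  next
    case False then show ?thesis by (simp add: YS step_def)
  qed
  have YD: "Y k \<in> Dens" for k using inv[of k] Binf unfolding Dens_def by auto
  have dlow: "u \<le> dens (Y k)" for k using ule[OF YD] inv by auto
  have dup: "dens (Y (Suc k)) \<le> u + inverse (real (Suc k))" for k
  proof (cases "dens (F k) \<le> dens (Y k)")
    case True
    have "has_density (Y (Suc k)) (dens (F k))" using stepT[OF True] inv[of k] by blast
    then have "dens (Y (Suc k)) = dens (F k)" by (rule dens_eq)
    then show ?thesis using F(3)[of k] by simp
  next
    case False then show ?thesis using F(3)[of k] by (simp add: YS step_def)
  qed
  have lim: "(\<lambda>k. dens (Y k)) \<longlonglongrightarrow> u"
  proof (rule LIMSEQ_imp_Suc)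
    have l2: "(\<lambda>k. u + inverse (real (Suc k))) \<longlonglongrightarrow> u + 0"
      by (rule tendsto_add[OF tendsto_const LIMSEQ_inverse_real_of_nat])
    show "(\<lambda>k. dens (Y (Suc k))) \<longlonglongrightarrow> u"
      by (rule tendsto_sandwich[OF _ _ tendsto_const l2[simplified]]) (use dlow dup in auto)
  qed
  obtain C where C: "(\<Inter>k. Y k) \<subseteq> C" "C \<subseteq> Y 0" "has_density C u"
    using glue[OF dec inv[THEN conjunct2, THEN conjunct2] lim] by blast
  have "A \<subseteq> C" using C(1) inv by blast
  moreover have "C \<subseteq> B" using C(2) Y0 by simp
  moreover have "C \<in> Dens" using C(3) \<open>C \<subseteq> B\<close> Binf unfolding Dens_def by auto
  moreover have "dens C = u" using C(3) by (rule dens_eq)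
  ultimately show ?thesis using uS ule by auto
qed

theorem proposition3p12:
  fixes A B :: "nat set"
  assumes "A \<subseteq> B" and "B \<subseteq> {1..}"
  shows "(B \<in> Dens \<longrightarrow> (\<exists>C\<in>Dens. dens C = upper_dd A \<and> A \<subseteq> C \<and> C \<subseteq> B))
       \<and> (A \<in> Dens \<longrightarrow> (\<exists>C\<in>Dens. dens C = lower_dd B \<and> A \<subseteq> C \<and> C \<subseteq> B))"
proof (intro conjI impI)
  assume "B \<in> Dens"
  from part1[OF assms(1) this] obtain C where "C \<in> Dens" "dens C = upper_dd A" "A \<subseteq> C" "C \<subseteq> B"
    by blast
  then show "\<exists>C\<in>Dens. dens C = upper_dd A \<and> A \<subseteq> C \<and> C \<subseteq> B" by blast
next
  assume AD: "A \<in> Dens"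
  have cD: "{1..} - Z \<in> Dens" "dens ({1..} - Z) = 1 - dens Z" if "Z \<in> Dens" for Z
  proof -
    have h: "has_density ({1..} - Z) (1 - dens Z)" by (rule compl_density[OF Dens_has[OF that]])
    have "{1..} - Z \<subseteq> {1..}" by blast
    then show "{1..} - Z \<in> Dens" unfolding Dens_def using h by blast
    show "dens ({1..} - Z) = 1 - dens Z" using h by (rule dens_eq)
  qed
  have sub: "{1..} - B \<subseteq> {1..} - A" using assms(1) by blast
  from part1[OF sub cD(1)[OF AD]] obtain C' where C': "C' \<in> Dens" "{1..} - B \<subseteq> C'" "C' \<subseteq> {1..} - A"
    and mn: "\<forall>Z\<in>Dens. {1..} - B \<subseteq> Z \<longrightarrow> dens C' \<le> dens Z"
    by blast
  define C where "C = {1..} - C'"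
  have CD: "C \<in> Dens" unfolding C_def by (rule cD(1)[OF C'(1)])
  have dC: "dens C = 1 - dens C'" unfolding C_def by (rule cD(2)[OF C'(1)])
  have AU: "A \<subseteq> {1..}" using AD unfolding Dens_def by blast
  have AC: "A \<subseteq> C" unfolding C_def using C'(3) AU by blast
  have CB: "C \<subseteq> B" unfolding C_def using C'(2) by blast
  have "lower_dd B = dens C"
    unfolding lower_dd_def
  proof (rule cSup_eq_maximum)
    show "dens C \<in> {dens Z |Z. Z \<subseteq> B \<and> Z \<in> Dens}" using CB CD by blast
    fix x assume "x \<in> {dens Z |Z. Z \<subseteq> B \<and> Z \<in> Dens}"
    then obtain Z where Z: "x = dens Z" "Z \<subseteq> B" "Z \<in> Dens" by blast
    have "{1..} - B \<subseteq> {1..} - Z" using Z(2) by blast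
    then have "dens C' \<le> dens ({1..} - Z)" using mn cD(1)[OF Z(3)] by blast
    then show "x \<le> dens C" using cD(2)[OF Z(3)] dC Z(1) by simp
  qed
  then have "dens C = lower_dd B \<and> A \<subseteq> C \<and> C \<subseteq> B" using AC CB by simp
  then show "\<exists>C\<in>Dens. dens C = lower_dd B \<and> A \<subseteq> C \<and> C \<subseteq> B" using CD by (rule bexI[of _ C])
qed

end
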